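(* (Depth efficiency) Fix a leading degree $r\ge 2$. Let $\bm d_q=(d_0,\dots,d_{h_q})$ be a QRes architecture whose functional variety is filling, with leading functional variety $\mathcal{V}^2_{\bm d_q,r}$, and let $\bm d_n=(d_0',\dots,d_{h_n}')$ be a plain neural network architecture with leading functional variety $\mathcal{V}_{\bm d_n,r}$, where $h_n,h_q>1$, $d_0=d_0'$ and $d_{h_q}=d'_{h_n}$. If $\dim\mathcal{V}_{\bm d_n,r}\ge\dim\mathcal{V}^2_{\bm d_q,r}$, then $$h_n\ \ge\ 1+\Big(1+\frac{\log 2}{\log r}\Big)(h_q-1).$$
   Context: An architecture is a vector $\bm d=(d_0,\dots,d_h)$ of layer widths; $h$ is the depth, and layer $i$ maps $\mathbb{R}^{d_{i-1}}\to\mathbb{R}^{d_i}$. A plain neural-network layer is $x\mapsto\sigma(Wx+b)$; a QRes layer is $x\mapsto\sigma(W_2x\circ W_1x+W_1x+b)$, with trainable $W_1,W_2,b$, $\circ$ the Hadamard product, $\sigma$ applied entrywise. The functional space of an architecture is the image of the parameter-to-function map. Any activation is decomposed (e.g. by Taylor approximation) into polynomials; the highest degree $r$ appearing is its leading degree. The leading functional space is the subspace of the functional space consisting of homogeneous polynomials of highest degree; its Zariski closure is the leading functional variety, denoted $\mathcal{V}_{\bm d,r}$ (plain network, activation of leading degree $r$) or $\mathcal{V}^2_{\bm d,r}$ (QRes network). $\mathrm{Sym}_k(\mathbb{R}^n)$ denotes homogeneous degree-$k$ polynomials in $n$ real variables. A plain architecture $\bm d$ has a filling functional variety for degree $r$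 if $\mathcal{V}_{\bm d,r}=\mathrm{Sym}_{r^{h-1}}(\mathbb{R}^{d_0})^{d_h}$; a QRes architecture is filling for leading degree $r$ if its leading functional variety equals the full space of $d_h$-tuples of homogeneous polynomials of its leading degree, namely $\mathcal{V}^2_{\bm d,r}=\mathrm{Sym}_{(2r)^{h-1}}(\mathbb{R}^{d_0})^{d_h}$. *)

theory Defs
  imports Complex_Main
begin

text \<open>Vectors are functions nat \<Rightarrow> real; only the first d coordinates are meaningful.
  An architecture is a list of layer widths [d_0, ..., d_h]; its depth is h = length - 1.\<close>

type_synonym vec = "nat \<Rightarrow> real"

definition arch :: "nat list \<Rightarrow> bool" where
  "arch ds \<longleftrightarrow> length ds \<ge> 2 \<and> (\<forall>d\<in>set ds. d \<ge> 1)"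

definition depth :: "nat list \<Rightarrow> nat" where
  "depth ds = length ds - 1"

definition lin :: "nat \<Rightarrow> nat \<Rightarrow> (nat \<Rightarrow> nat \<Rightarrow> real) \<Rightarrow> vec \<Rightarrow> vec" where
  "lin dout din W x = (\<lambda>i. if i < dout then (\<Sum>j<din. W i j * x j) else 0)"

text \<open>Leading (top-degree homogeneous) part of a plain network with activation of
  leading degree r: x \<mapsto> W_h (W_{h-1} ( ... (W_1 x)^r ...)^r), last layer linear.
  Ws i is the weight matrix of layer i (i = 1..h).\<close>
fun plain_rec :: "nat list \<Rightarrow> nat \<Rightarrow> (nat \<Rightarrow> nat \<Rightarrow> nat \<Rightarrow> real) \<Rightarrow> nat \<Rightarrow> vec \<Rightarrow> vec" where
  "plain_rec ds r Ws 0 x = (\<lambda>j. if j < ds ! 0 then x j else 0)"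
| "plain_rec ds r Ws (Suc i) x =
     (let z = lin (ds ! Suc i) (ds ! i) (Ws (Suc i)) (plain_rec ds r Ws i x)
      in if Suc i < depth ds then (\<lambda>j. z j ^ r) else z)"

text \<open>Leading part of a QRes network: hidden layer y \<mapsto> ((W_2 y) \<circ> (W_1 y))^r (the leading part
  of \<sigma>(W_2 y \<circ> W_1 y + W_1 y + b)), last layer linear y \<mapsto> W_1 y, giving degree (2r)^(h-1).\<close>
fun qres_rec :: "nat list \<Rightarrow> nat \<Rightarrow> (nat \<Rightarrow> nat \<Rightarrow> nat \<Rightarrow> real) \<Rightarrow> (nat \<Rightarrow> nat \<Rightarrow> nat \<Rightarrow> real)
                 \<Rightarrow> nat \<Rightarrow> vec \<Rightarrow> vec" where
  "qres_rec ds r W1 W2 0 x = (\<lambda>j. if j < ds ! 0 then x j else 0)"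
| "qres_rec ds r W1 W2 (Suc i) x =
     (let y = qres_rec ds r W1 W2 i x;
          a = lin (ds ! Suc i) (ds ! i) (W1 (Suc i)) y;
          b = lin (ds ! Suc i) (ds ! i) (W2 (Suc i)) y
      in if Suc i < depth ds then (\<lambda>j. (b j * a j) ^ r) else a)"

definition plain_lead_space :: "nat list \<Rightarrow> nat \<Rightarrow> (vec \<Rightarrow> vec) set" where
  "plain_lead_space ds r = {plain_rec ds r Ws (depth ds) | Ws. True}"

definition qres_lead_space :: "nat list \<Rightarrow> nat \<Rightarrow> (vec \<Rightarrow> vec) set" where
  "qres_lead_space ds r = {qres_rec ds r W1 W2 (depth ds) | W1 W2. True}"

definition monoms :: "nat \<Rightarrow> nat \<Rightarrow> (nat \<Rightarrow> nat) set" where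
  "monoms n k = {\<alpha>. (\<forall>i\<ge>n. \<alpha> i = 0) \<and> (\<Sum>i<n. \<alpha> i) = k}"

definition hom_form :: "nat \<Rightarrow> nat \<Rightarrow> (vec \<Rightarrow> real) \<Rightarrow> bool" where
  "hom_form n k g \<longleftrightarrow> (\<exists>c. \<forall>x. g x = (\<Sum>\<alpha>\<in>monoms n k. c \<alpha> * (\<Prod>i<n. x i ^ \<alpha> i)))"

definition coeff :: "nat \<Rightarrow> nat \<Rightarrow> (vec \<Rightarrow> real) \<Rightarrow> (nat \<Rightarrow> nat) \<Rightarrow> real" where
  "coeff n k g = (THE c. (\<forall>\<alpha>. \<alpha> \<notin> monoms n k \<longrightarrow> c \<alpha> = 0) \<and>
                         (\<forall>x. g x = (\<Sum>\<alpha>\<in>monoms n k. c \<alpha> * (\<Prod>i<n. x i ^ \<alpha> i))))"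

text \<open>Coordinates of a D-tuple of degree-k forms in n variables: index (j, \<alpha>).\<close>
type_synonym cidx = "nat \<times> (nat \<Rightarrow> nat)"

definition cindex :: "nat \<Rightarrow> nat \<Rightarrow> nat \<Rightarrow> cidx set" where
  "cindex n k D = {..<D} \<times> monoms n k"

definition coords :: "nat \<Rightarrow> nat \<Rightarrow> nat \<Rightarrow> (vec \<Rightarrow> vec) \<Rightarrow> cidx \<Rightarrow> real" where
  "coords n k D F = (\<lambda>(j, \<alpha>). if j < D then coeff n k (\<lambda>x. F x j) \<alpha> else 0)"

definition sym_tuples :: "nat \<Rightarrow> nat \<Rightarrow> nat \<Rightarrow> (cidx \<Rightarrow> real) set" where
  "sym_tuples n k D = coords n k D ` {F. \<forall>j<D. hom_form n k (\<lambda>x. F x j)}"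

definition poly_on :: "'i set \<Rightarrow> (('i \<Rightarrow> real) \<Rightarrow> real) \<Rightarrow> bool" where
  "poly_on I p \<longleftrightarrow> (\<exists>M c. finite M \<and> (\<forall>m\<in>M. \<forall>i. i \<notin> I \<longrightarrow> m i = (0::nat)) \<and>
      (\<forall>y. p y = (\<Sum>m\<in>M. c m * (\<Prod>i\<in>I. y i ^ m i))))"

definition zclosed :: "'i set \<Rightarrow> ('i \<Rightarrow> real) set \<Rightarrow> bool" where
  "zclosed I V \<longleftrightarrow> (\<exists>P. (\<forall>p\<in>P. poly_on I p) \<and>
      V = {y. (\<forall>i. i \<notin> I \<longrightarrow> y i = 0) \<and> (\<forall>p\<in>P. p y = 0)})"

definition zclosure :: "'i set \<Rightarrow> ('i \<Rightarrow> real) set \<Rightarrow> ('i \<Rightarrow> real) set" where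
  "zclosure I S = \<Inter> {V. zclosed I V \<and> S \<subseteq> V}"

definition zirreducible :: "'i set \<Rightarrow> ('i \<Rightarrow> real) set \<Rightarrow> bool" where
  "zirreducible I V \<longleftrightarrow> zclosed I V \<and> V \<noteq> {} \<and>
     (\<forall>A B. zclosed I A \<longrightarrow> zclosed I B \<longrightarrow> V \<subseteq> A \<union> B \<longrightarrow> V \<subseteq> A \<or> V \<subseteq> B)"

definition zdim :: "'i set \<Rightarrow> ('i \<Rightarrow> real) set \<Rightarrow> nat" where
  "zdim I V = Sup {n. \<exists>Z. (\<forall>k\<le>n. zirreducible I (Z k) \<and> Z k \<subseteq> V) \<and> (\<forall>k<n. Z k \<subset> Z (Suc k))}"

definition plain_index :: "nat list \<Rightarrow> nat \<Rightarrow> cidx set" where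
  "plain_index ds r = cindex (ds ! 0) (r ^ (depth ds - 1)) (last ds)"

definition qres_index :: "nat list \<Rightarrow> nat \<Rightarrow> cidx set" where
  "qres_index ds r = cindex (ds ! 0) ((2 * r) ^ (depth ds - 1)) (last ds)"

definition plain_variety :: "nat list \<Rightarrow> nat \<Rightarrow> (cidx \<Rightarrow> real) set" where
  "plain_variety ds r = zclosure (plain_index ds r)
     (coords (ds ! 0) (r ^ (depth ds - 1)) (last ds) ` plain_lead_space ds r)"

definition qres_variety :: "nat list \<Rightarrow> nat \<Rightarrow> (cidx \<Rightarrow> real) set" where
  "qres_variety ds r = zclosure (qres_index ds r)
     (coords (ds ! 0) ((2 * r) ^ (depth ds - 1)) (last ds) ` qres_lead_space ds r)"

definition qres_filling :: "nat list \<Rightarrow> nat \<Rightarrow> bool" where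
  "qres_filling ds r \<longleftrightarrow>
     qres_variety ds r = sym_tuples (ds ! 0) ((2 * r) ^ (depth ds - 1)) (last ds)"

end

theory Submission
  imports Defs "HOL-Computational_Algebra.Polynomial" "HOL-Library.FuncSet"
begin


definition mnm :: "'i set \<Rightarrow> ('i \<Rightarrow> nat) \<Rightarrow> ('i \<Rightarrow> real) \<Rightarrow> real" where
  "mnm I m y = (\<Prod>i\<in>I. y i ^ m i)"

definition MK :: "'i set \<Rightarrow> nat \<Rightarrow> ('i \<Rightarrow> nat) set" where
  "MK I k = {m. (\<forall>i. i \<notin> I \<longrightarrow> m i = 0) \<and> (\<forall>i\<in>I. m i \<le> k)}"

definition inQ :: "'i set \<Rightarrow> nat \<Rightarrow> (('i \<Rightarrow> real) \<Rightarrow> real) \<Rightarrow> bool" where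
  "inQ I k f \<longleftrightarrow> (\<exists>c. \<forall>y. f y = (\<Sum>m\<in>MK I k. c m * mnm I m y))"

lemma MK_inj: "inj_on (\<lambda>m. restrict m I) (MK I k)"
proof (rule inj_onI)
  fix m m' assume a: "m \<in> MK I k" "m' \<in> MK I k" "restrict m I = restrict m' I"
  show "m = m'"
  proof
    fix i
    have "restrict m I i = restrict m' I i" using a(3) by simp
    then show "m i = m' i"
      using a(1,2) by (cases "i \<in> I") (auto simp: MK_def)
  qed
qed

lemma MK_sub: "(\<lambda>m. restrict m I) ` MK I k \<subseteq> PiE I (\<lambda>_. {..k})"
  by (auto simp: MK_def)

lemma finite_MK: assumes "finite I" shows "finite (MK I k)"
proof -
  have "finite (PiE I (\<lambda>_. {..k}))" using assms by (intro finite_PiE) auto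
  then have "finite ((\<lambda>m. restrict m I) ` MK I k)" by (rule finite_subset[OF MK_sub])
  then show ?thesis using MK_inj finite_imageD by metis
qed

lemma card_MK: "finite I \<Longrightarrow> card (MK I k) \<le> (k+1) ^ card I"
proof -
  assume f: "finite I"
  have "card (MK I k) = card ((\<lambda>m. restrict m I) ` MK I k)"
    using MK_inj card_image by metis
  also have "\<dots> \<le> card (PiE I (\<lambda>_. {..k}))"
    by (rule card_mono) (use f MK_sub in \<open>auto intro!: finite_PiE\<close>)
  also have "\<dots> = (k+1) ^ card I" using f by (simp add: card_PiE)
  finally show ?thesis .
qed

lemma inQ_mono_mem: assumes "finite I" "m \<in> MK I k" shows "inQ I k (mnm I m)"
  unfolding inQ_def
proof (rule exI[of _ "\<lambda>m'. if m' = m then 1 else 0"], intro allI)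
  fix y
  have "(\<Sum>ma\<in>MK I k. (if ma = m then 1 else 0) * mnm I ma y) = (\<Sum>ma\<in>MK I k. if ma = m then mnm I ma y else 0)"
    by (rule sum.cong) auto
  also have "\<dots> = mnm I m y" using assms(2) by (simp add: sum.delta[OF finite_MK[OF assms(1)]])
  finally show "mnm I m y = (\<Sum>ma\<in>MK I k. (if ma = m then 1 else 0) * mnm I ma y)" by simp
qed

lemma inQ_add: "inQ I k f \<Longrightarrow> inQ I k g \<Longrightarrow> inQ I k (\<lambda>y. f y + g y)"
  unfolding inQ_def
proof (elim exE)
  fix c d assume "\<forall>y. f y = (\<Sum>m\<in>MK I k. c m * mnm I m y)" "\<forall>y. g y = (\<Sum>m\<in>MK I k. d m * mnm I m y)"
  then show "\<exists>c. \<forall>y. f y + g y = (\<Sum>m\<in>MK I k. c m * mnm I m y)"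
    by (intro exI[of _ "\<lambda>m. c m + d m"]) (simp add: distrib_right sum.distrib)
qed

lemma inQ_smult: "inQ I k f \<Longrightarrow> inQ I k (\<lambda>y. a * f y)"
  unfolding inQ_def
proof (elim exE)
  fix c assume "\<forall>y. f y = (\<Sum>m\<in>MK I k. c m * mnm I m y)"
  then show "\<exists>c. \<forall>y. a * f y = (\<Sum>m\<in>MK I k. c m * mnm I m y)"
    by (intro exI[of _ "\<lambda>m. a * c m"]) (simp add: sum_distrib_left mult.assoc)
qed

lemma inQ_zero: "inQ I k (\<lambda>y. 0)"
  unfolding inQ_def by (intro exI[of _ "\<lambda>m. 0"]) simp

lemma inQ_sum: "finite A \<Longrightarrow> (\<And>a. a \<in> A \<Longrightarrow> inQ I k (F a)) \<Longrightarrow> inQ I k (\<lambda>y. \<Sum>a\<in>A. F a y)"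
proof (induction A rule: finite_induct)
  case empty then show ?case by (simp add: inQ_zero)
next
  case (insert x A)
  then show ?case using inQ_add[of I k "F x" "\<lambda>y. \<Sum>a\<in>A. F a y"] by simp
qed

lemma mnm_add: "mnm I (\<lambda>i. m i + m' i) y = mnm I m y * mnm I m' y"
  unfolding mnm_def by (simp add: power_add prod.distrib)

lemma inQ_mult: assumes fI: "finite I" and f: "inQ I e f" and g: "inQ I k g"
  shows "inQ I (e+k) (\<lambda>y. f y * g y)"
proof -
  obtain c where c: "\<forall>y. f y = (\<Sum>m\<in>MK I e. c m * mnm I m y)" using f unfolding inQ_def by blast
  obtain d where d: "\<forall>y. g y = (\<Sum>m\<in>MK I k. d m * mnm I m y)" using g unfolding inQ_def by blast
  have eq: "f y * g y = (\<Sum>m\<in>MK I e. \<Sum>m'\<in>MK I k. (c m * d m') * mnm I (\<lambda>i. m i + m' i) y)" for y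
    by (simp add: c d sum_product mnm_add mult_ac)
  have mem: "(\<lambda>i. m i + m' i) \<in> MK I (e+k)" if "m \<in> MK I e" "m' \<in> MK I k" for m m'
    using that by (auto simp: MK_def add_mono)
  show ?thesis
    unfolding eq
    by (intro inQ_sum inQ_smult inQ_mono_mem finite_MK fI mem) auto
qed

lemma inQ_le: assumes fI: "finite I" and "e \<le> k" and f: "inQ I e f" shows "inQ I k f"
proof -
  obtain c where c: "\<forall>y. f y = (\<Sum>m\<in>MK I e. c m * mnm I m y)" using f unfolding inQ_def by blast
  have "MK I e \<subseteq> MK I k" using assms(2) by (auto simp: MK_def)
  then show ?thesis
    unfolding c[rule_format, abs_def]
    by (intro inQ_sum inQ_smult inQ_mono_mem finite_MK fI) auto
qed

lemma poly_on_inQ: assumes fI: "finite I" and p: "poly_on I p" shows "\<exists>e. inQ I e p"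
proof -
  obtain M c where M: "finite M" "\<forall>m\<in>M. \<forall>i. i \<notin> I \<longrightarrow> m i = 0"
     and pe: "\<forall>y. p y = (\<Sum>m\<in>M. c m * (\<Prod>i\<in>I. y i ^ m i))"
    using p unfolding poly_on_def by blast
  define e where "e = (\<Sum>m\<in>M. \<Sum>i\<in>I. m i)"
  have mem: "m \<in> MK I e" if "m \<in> M" for m
  proof -
    have "m i \<le> e" if "i \<in> I" for i
    proof -
      have "m i \<le> (\<Sum>i\<in>I. m i)" using fI that by (intro member_le_sum) auto
      also have "\<dots> \<le> e" unfolding e_def using M(1) \<open>m \<in> M\<close>
        by (intro member_le_sum[where f="\<lambda>m. \<Sum>i\<in>I. m i"]) auto
      finally show ?thesis .
    qed
    then show ?thesis using M(2) \<open>m \<in> M\<close> by (auto simp: MK_def)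
  qed
  have "inQ I e (\<lambda>y. \<Sum>m\<in>M. c m * mnm I m y)"
    by (intro inQ_sum inQ_smult inQ_mono_mem fI M mem)
  moreover have "p = (\<lambda>y. \<Sum>m\<in>M. c m * mnm I m y)" using pe by (auto simp: mnm_def)
  ultimately show ?thesis by auto
qed

lemma inQ_poly_on: assumes fI: "finite I" and f: "inQ I k f" shows "poly_on I f"
proof -
  obtain c where c: "\<forall>y. f y = (\<Sum>m\<in>MK I k. c m * mnm I m y)" using f unfolding inQ_def by blast
  show ?thesis unfolding poly_on_def
    apply (rule exI[of _ "MK I k"], rule exI[of _ c])
    using finite_MK[OF fI] by (auto simp: MK_def c mnm_def)
qed

lemma lin_dep:
  assumes "finite E"
  shows "\<And>A (L :: 'a \<Rightarrow> 'e \<Rightarrow> real). finite A \<Longrightarrow> card E < card A \<Longrightarrow>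
    \<exists>c. (\<exists>i\<in>A. c i \<noteq> 0) \<and> (\<forall>e\<in>E. (\<Sum>i\<in>A. c i * L i e) = 0)"
  using assms
proof (induction E rule: finite_induct)
  case empty
  then obtain i where "i \<in> A" by fastforce
  then show ?case by (intro exI[of _ "\<lambda>_. 1"]) auto
next
  case (insert e0 E)
  show ?case
  proof (cases "\<forall>i\<in>A. L i e0 = 0")
    case True
    obtain c where c: "\<exists>i\<in>A. c i \<noteq> 0" "\<forall>e\<in>E. (\<Sum>i\<in>A. c i * L i e) = 0"
      using insert.IH[of A L] insert.prems insert.hyps by auto
    then show ?thesis using True by (intro exI[of _ c]) auto
  next
    case False
    then obtain i0 where i0: "i0 \<in> A" "L i0 e0 \<noteq> 0" by blast
    define A' where "A' = A - {i0}"
    define L' where "L' = (\<lambda>i e. L i e - (L i e0 / L i0 e0) * L i0 e)"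
    have "card A' = card A - 1" unfolding A'_def using i0 insert.prems by simp
    then have "card E < card A'" using insert.prems insert.hyps by simp
    then obtain c' where c': "\<exists>i\<in>A'. c' i \<noteq> 0" "\<forall>e\<in>E. (\<Sum>i\<in>A'. c' i * L' i e) = 0"
      using insert.IH[of A' L'] insert.prems unfolding A'_def by auto
    define s where "s = (\<Sum>i\<in>A'. c' i * L i e0)"
    define c where "c = c'(i0 := - s / L i0 e0)"
    have fA': "finite A'" using insert.prems unfolding A'_def by simp
    have i0A': "i0 \<notin> A'" unfolding A'_def by simp
    have Aeq: "A = insert i0 A'" unfolding A'_def using i0 by auto
    have sumA: "(\<Sum>i\<in>A. c i * L i e) = (\<Sum>i\<in>A'. c' i * L i e) + c i0 * L i0 e" for e
    proof -
      have "(\<Sum>i\<in>A'. c i * L i e) = (\<Sum>i\<in>A'. c' i * L i e)"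
        by (rule sum.cong) (use i0A' in \<open>auto simp: c_def\<close>)
      then show ?thesis unfolding Aeq using fA' i0A' by (simp add: add.commute)
    qed
    have "\<forall>e\<in>insert e0 E. (\<Sum>i\<in>A. c i * L i e) = 0"
    proof
      fix e assume e: "e \<in> insert e0 E"
      show "(\<Sum>i\<in>A. c i * L i e) = 0"
      proof (cases "e = e0")
        case True
        then show ?thesis using i0 by (simp only: sumA) (simp add: c_def s_def)
      next
        case False
        then have eE: "e \<in> E" using e by auto
        have "(\<Sum>i\<in>A'. c' i * L i e) = (\<Sum>i\<in>A'. c' i * L' i e) + (\<Sum>i\<in>A'. c' i * (L i e0 / L i0 e0) * L i0 e)"
          unfolding L'_def by (simp add: sum.distrib[symmetric] algebra_simps)
        also have "\<dots> = s / L i0 e0 * L i0 e"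
          using c'(2) eE unfolding s_def by (simp add: sum_distrib_right sum_divide_distrib)
        finally show ?thesis using i0 by (simp only: sumA) (simp add: c_def)
      qed
    qed
    moreover have "\<exists>i\<in>A. c i \<noteq> 0" using c'(1) i0A' Aeq unfolding c_def by auto
    ultimately show ?thesis by blast
  qed
qed



definition indep :: "('i \<Rightarrow> real) set \<Rightarrow> nat \<Rightarrow> (nat \<Rightarrow> ('i \<Rightarrow> real) \<Rightarrow> real) \<Rightarrow> bool" where
  "indep Z a g \<longleftrightarrow> (\<forall>c. (\<forall>y\<in>Z. (\<Sum>i<a. c i * g i y) = 0) \<longrightarrow> (\<forall>i<a. c i = 0))"

definition hasind :: "'i set \<Rightarrow> ('i \<Rightarrow> real) set \<Rightarrow> nat \<Rightarrow> nat \<Rightarrow> bool" where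
  "hasind I Z k a \<longleftrightarrow> (\<exists>g. (\<forall>i<a. inQ I k (g i)) \<and> indep Z a g)"

lemma hasind_bound: assumes fI: "finite I" and h: "hasind I Z k a" shows "a \<le> card (MK I k)"
proof (rule ccontr)
  assume "\<not> a \<le> card (MK I k)"
  then have lt: "card (MK I k) < card {..<a}" by simp
  obtain g where g: "\<forall>i<a. inQ I k (g i)" "indep Z a g" using h unfolding hasind_def by blast
  have "\<forall>i<a. \<exists>c. \<forall>y. g i y = (\<Sum>m\<in>MK I k. c m * mnm I m y)" using g(1) unfolding inQ_def by blast
  then obtain C where C: "\<forall>i<a. \<forall>y. g i y = (\<Sum>m\<in>MK I k. C i m * mnm I m y)" by metis
  obtain c where c: "\<exists>i\<in>{..<a}. c i \<noteq> 0" "\<forall>m\<in>MK I k. (\<Sum>i\<in>{..<a}. c i * C i m) = 0"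
    using lin_dep[OF finite_MK[OF fI] _ lt, of C] by auto
  have "(\<Sum>i<a. c i * g i y) = 0" for y
  proof -
    have "(\<Sum>i<a. c i * g i y) = (\<Sum>i<a. \<Sum>m\<in>MK I k. c i * C i m * mnm I m y)"
      using C by (simp add: sum_distrib_left mult.assoc)
    also have "\<dots> = (\<Sum>m\<in>MK I k. (\<Sum>i<a. c i * C i m) * mnm I m y)"
      by (subst sum.swap) (simp add: sum_distrib_right)
    also have "\<dots> = 0" using c(2) by simp
    finally show ?thesis .
  qed
  then have "\<forall>i<a. c i = 0" using g(2) unfolding indep_def by blast
  then show False using c(1) by auto
qed

lemma hasind_mono_k: "finite I \<Longrightarrow> hasind I Z k a \<Longrightarrow> k \<le> k' \<Longrightarrow> hasind I Z k' a"
  unfolding hasind_def using inQ_le by blast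

lemma mnm_zero: "mnm I (\<lambda>_. 0) = (\<lambda>y. 1)"
  by (rule ext) (simp add: mnm_def)

lemma hasind_one: assumes fI: "finite I" and "Z \<noteq> {}" shows "hasind I Z k 1"
proof -
  have "inQ I k (\<lambda>y. 1)"
    using inQ_le[OF fI _ inQ_mono_mem[OF fI, of "\<lambda>_. 0" 0]] by (simp add: MK_def mnm_zero)
  moreover have "indep Z 1 (\<lambda>i y. 1)"
    using assms(2) unfolding indep_def by auto
  ultimately show ?thesis unfolding hasind_def by (intro exI[of _ "\<lambda>i y. 1"]) auto
qed

lemma zclosed_sub: "zclosed I Z \<Longrightarrow> y \<in> Z \<Longrightarrow> i \<notin> I \<Longrightarrow> y i = 0"
  unfolding zclosed_def by auto

lemma irr_mult: assumes fI: "finite I" and Z: "zirreducible I Z" and f: "inQ I e f" and g: "inQ I k g"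
  and fg: "\<forall>y\<in>Z. f y * g y = 0"
  shows "(\<forall>y\<in>Z. f y = 0) \<or> (\<forall>y\<in>Z. g y = 0)"
proof -
  define A where "A = {y. (\<forall>i. i \<notin> I \<longrightarrow> y i = 0) \<and> (\<forall>p\<in>{f}. p y = 0)}"
  define B where "B = {y. (\<forall>i. i \<notin> I \<longrightarrow> y i = 0) \<and> (\<forall>p\<in>{g}. p y = 0)}"
  have "zclosed I A" unfolding A_def zclosed_def using inQ_poly_on[OF fI f] by blast
  moreover have "zclosed I B" unfolding B_def zclosed_def using inQ_poly_on[OF fI g] by blast
  moreover have "Z \<subseteq> A \<union> B"
    using fg zclosed_sub[of I Z] Z unfolding zirreducible_def A_def B_def by auto
  ultimately have "Z \<subseteq> A \<or> Z \<subseteq> B" using Z unfolding zirreducible_def by blast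
  then show ?thesis unfolding A_def B_def by auto
qed

lemma sum_split_nat: "(\<Sum>i<b+a. F i) = (\<Sum>i<b. F i) + (\<Sum>i<a. F (b+i :: nat))"
  by (induction a) (simp_all add: add.assoc)

lemma hasind_step:
  assumes fI: "finite I" and Z': "zirreducible I Z'" and sub: "Z \<subseteq> Z'" and f: "inQ I e f"
    and fz: "\<forall>y\<in>Z. f y = 0" and y0: "y0 \<in> Z'" "f y0 \<noteq> 0"
    and h1: "hasind I Z' k a" and h2: "hasind I Z (e+k) b"
  shows "hasind I Z' (e+k) (b+a)"
proof -
  obtain g where g: "\<forall>i<a. inQ I k (g i)" "indep Z' a g" using h1 unfolding hasind_def by blast
  obtain p where p: "\<forall>i<b. inQ I (e+k) (p i)" "indep Z b p" using h2 unfolding hasind_def by blast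
  define h where "h = (\<lambda>i y. if i < b then p i y else f y * g (i - b) y)"
  have hQ: "\<forall>i<b+a. inQ I (e+k) (h i)"
  proof (intro allI impI)
    fix i assume i: "i < b + a"
    show "inQ I (e+k) (h i)"
    proof (cases "i < b")
      case True then show ?thesis using p(1) by (simp add: h_def)
    next
      case False
      then have "inQ I (e+k) (\<lambda>y. f y * g (i - b) y)" using i g(1) by (intro inQ_mult[OF fI f]) auto
      then show ?thesis using False by (simp add: h_def)
    qed
  qed
  have "indep Z' (b+a) h" unfolding indep_def
  proof (rule allI, rule impI)
    fix c assume c: "\<forall>y\<in>Z'. (\<Sum>i<b+a. c i * h i y) = 0"
    have split: "(\<Sum>i<b+a. c i * h i y) = (\<Sum>i<b. c i * p i y) + f y * (\<Sum>i<a. c (b+i) * g i y)" for y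
      by (simp add: sum_split_nat h_def sum_distrib_left mult_ac)
    have "\<forall>y\<in>Z. (\<Sum>i<b. c i * p i y) = 0"
    proof
      fix y assume y: "y \<in> Z"
      then have "y \<in> Z'" using sub by auto
      then have "(\<Sum>i<b. c i * p i y) + f y * (\<Sum>i<a. c (b+i) * g i y) = 0"
        using c split[of y] by simp
      then show "(\<Sum>i<b. c i * p i y) = 0" using fz y by simp
    qed
    then have cb: "\<forall>i<b. c i = 0" using p(2) unfolding indep_def by blast
    have "\<forall>y\<in>Z'. f y * (\<Sum>i<a. c (b+i) * g i y) = 0" using c split cb by simp
    moreover have "inQ I k (\<lambda>y. \<Sum>i<a. c (b+i) * g i y)"
      using g(1) by (intro inQ_sum inQ_smult) auto
    ultimately have "(\<forall>y\<in>Z'. f y = 0) \<or> (\<forall>y\<in>Z'. (\<Sum>i<a. c (b+i) * g i y) = 0)"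
      using irr_mult[OF fI Z' f] by blast
    then have s0: "\<forall>y\<in>Z'. (\<Sum>i<a. c (b+i) * g i y) = 0" using y0 by auto
    have ca: "\<forall>i<a. c (b+i) = 0"
      using spec[OF g(2)[unfolded indep_def], of "\<lambda>i. c (b+i)"] s0 by simp
    show "\<forall>i<b+a. c i = 0"
    proof (intro allI impI)
      fix i assume "i < b + a"
      then show "c i = 0" using cb ca[rule_format, of "i - b"] by (cases "i < b") auto
    qed
  qed
  then show ?thesis using hQ unfolding hasind_def by blast
qed

lemma fact_binom: "(t+1)^m \<le> fact m * ((t+m) choose m)"
proof -
  have ft: "fact t * (t+1)^m \<le> (fact (t+m) :: nat)"
  proof (induction m)
    case 0 then show ?case by simp
  next
    case (Suc m)
    have "fact t * (t+1)^Suc m = (t+1) * (fact t * (t+1)^m)" by (simp add: mult_ac)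
    also have "\<dots> \<le> (t + Suc m) * fact (t+m)" using Suc by (intro mult_mono) auto
    also have "\<dots> = fact (t + Suc m)" by simp
    finally show ?case .
  qed
  have "fact m * fact t * ((t+m) choose m) = (fact (t+m) :: nat)"
    using binomial_fact_lemma[of m "t+m"] by simp
  then have "fact t * (t+1)^m \<le> fact t * (fact m * ((t+m) choose m))"
    using ft by (simp add: mult_ac)
  then show ?thesis by simp
qed

lemma chain_bound:
  assumes fI: "finite I" and irr: "\<forall>j\<le>n. zirreducible I (Z j)" and ch: "\<forall>j<n. Z j \<subset> Z (Suc j)"
  shows "n \<le> card I"
proof -
  have "\<forall>j<n. \<exists>e f y0. inQ I e f \<and> (\<forall>y\<in>Z j. f y = 0) \<and> y0 \<in> Z (Suc j) \<and> f y0 \<noteq> 0"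
  proof (intro allI impI)
    fix j assume j: "j < n"
    have cl: "zclosed I (Z j)" using irr j unfolding zirreducible_def by auto
    then obtain P where P: "\<forall>p\<in>P. poly_on I p" "Z j = {y. (\<forall>i. i \<notin> I \<longrightarrow> y i = 0) \<and> (\<forall>p\<in>P. p y = 0)}"
      unfolding zclosed_def by blast
    obtain y0 where y0: "y0 \<in> Z (Suc j)" "y0 \<notin> Z j" using ch j by blast
    have "zclosed I (Z (Suc j))" using irr j unfolding zirreducible_def by auto
    then have "\<forall>i. i \<notin> I \<longrightarrow> y0 i = 0" by (intro allI impI zclosed_sub[OF _ y0(1)])
    moreover have "\<not> ((\<forall>i. i \<notin> I \<longrightarrow> y0 i = 0) \<and> (\<forall>p\<in>P. p y0 = 0))"
      using y0(2) unfolding P(2) by simp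
    ultimately obtain p where p: "p \<in> P" "p y0 \<noteq> 0" by blast
    obtain e where e: "inQ I e p" using poly_on_inQ[OF fI] P(1) p(1) by blast
    have pz: "\<forall>y\<in>Z j. p y = 0"
    proof
      fix y assume "y \<in> Z j"
      then have "y \<in> {y. (\<forall>i. i \<notin> I \<longrightarrow> y i = 0) \<and> (\<forall>p\<in>P. p y = 0)}" using P(2) by simp
      then show "p y = 0" using p(1) by simp
    qed
    show "\<exists>e f y0. inQ I e f \<and> (\<forall>y\<in>Z j. f y = 0) \<and> y0 \<in> Z (Suc j) \<and> f y0 \<noteq> 0"
      using e pz p(2) y0(1) by blast
  qed
  then obtain ee ff yy where sep: "\<forall>j<n. inQ I (ee j) (ff j) \<and> (\<forall>y\<in>Z j. ff j y = 0) \<and> yy j \<in> Z (Suc j) \<and> ff j (yy j) \<noteq> 0"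
    by metis
  define E where "E = (\<Sum>j<n. ee j) + 1"
  have E1: "E \<ge> 1" unfolding E_def by simp
  have fE: "inQ I E (ff j)" if "j < n" for j
  proof -
    have "ee j \<le> (\<Sum>j<n. ee j)" using that by (intro member_le_sum) auto
    then show ?thesis using sep that inQ_le[OF fI, of "ee j" E] unfolding E_def by auto
  qed
  have ne: "Z j \<noteq> {}" if "j \<le> n" for j using irr that unfolding zirreducible_def by auto
  have main: "\<forall>t. hasind I (Z j) (t*E) ((t+j) choose j)" if "j \<le> n" for j
    using that
  proof (induction j)
    case 0 then show ?case using hasind_one[OF fI ne] by simp
  next
    case (Suc j)
    note IHj = Suc.IH
    have Sj: "Suc j \<le> n" by (rule Suc.prems)
    have jn: "j < n" using Sj by simp
    show ?case
    proof
      fix t show "hasind I (Z (Suc j)) (t*E) ((t + Suc j) choose Suc j)"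
      proof (induction t)
        case 0 then show ?case using hasind_one[OF fI ne[OF Sj]] by simp
      next
        case (Suc t)
        have h1: "hasind I (Z j) (Suc t * E) ((Suc t + j) choose j)"
          using IHj jn by (metis Suc_leD less_imp_le_nat)
        then have h2: "hasind I (Z j) (E + t*E) ((Suc t + j) choose j)" by simp
        have sub: "Z j \<subseteq> Z (Suc j)" using ch jn by auto
        have irrS: "zirreducible I (Z (Suc j))" using irr Sj by auto
        have "hasind I (Z (Suc j)) (E + t*E) (((Suc t + j) choose j) + ((t + Suc j) choose Suc j))"
          by (rule hasind_step[OF fI irrS sub fE[OF jn] _ _ _ Suc.IH h2, of "yy j"]) (use sep jn in auto)
        moreover have "((Suc t + j) choose j) + ((t + Suc j) choose Suc j) = (Suc t + Suc j) choose Suc j"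
          by simp
        ultimately show ?case by (simp add: add.commute)
      qed
    qed
  qed
  show ?thesis
  proof (rule ccontr)
    assume "\<not> n \<le> card I"
    then have le: "Suc (card I) \<le> n" by simp
    define N where "N = card I"
    define t where "t = fact (Suc N) * E ^ N"
    have "(t + Suc N) choose Suc N \<le> card (MK I (t*E))"
      using hasind_bound[OF fI] main[OF le] unfolding N_def by blast
    also have "\<dots> \<le> (t*E+1)^N" using card_MK[OF fI] unfolding N_def by blast
    also have "\<dots> \<le> (E*(t+1))^N" using E1 by (intro power_mono) (auto simp: algebra_simps)
    finally have A: "(t + Suc N) choose Suc N \<le> (E*(t+1))^N" .
    have "(t+1)^Suc N \<le> fact (Suc N) * ((t + Suc N) choose Suc N)" by (rule fact_binom)
    also have "\<dots> \<le> fact (Suc N) * (E*(t+1))^N" using A by simp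
    also have "\<dots> = (fact (Suc N) * E^N) * (t+1)^N" by (simp only: power_mult_distrib mult.assoc)
    also have "\<dots> = t * (t+1)^N" by (simp only: t_def)
    finally have "(t+1) * (t+1)^N \<le> t * (t+1)^N" by simp
    then show False by simp
  qed
qed

definition chainset :: "'i set \<Rightarrow> ('i \<Rightarrow> real) set \<Rightarrow> nat set" where
  "chainset I V = {n. \<exists>Z. (\<forall>k\<le>n. zirreducible I (Z k) \<and> Z k \<subseteq> V) \<and> (\<forall>k<n. Z k \<subset> Z (Suc k))}"

lemma zdim_chainset: "zdim I V = Sup (chainset I V)"
  unfolding zdim_def chainset_def by simp

lemma chainset_le: assumes "finite I" "n \<in> chainset I V" shows "n \<le> card I"
proof -
  obtain Z where Z: "\<forall>k\<le>n. zirreducible I (Z k) \<and> Z k \<subseteq> V" "\<forall>k<n. Z k \<subset> Z (Suc k)"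
    using assms(2) unfolding chainset_def by blast
  show ?thesis by (rule chain_bound[OF assms(1)]) (use Z in auto)
qed

lemma zdim_le: assumes "finite I" shows "zdim I V \<le> card I"
proof (cases "chainset I V = {}")
  case True then show ?thesis by (simp add: zdim_chainset)
next
  case False then show ?thesis unfolding zdim_chainset
    by (intro cSup_least) (auto intro: chainset_le[OF assms])
qed

lemma zdim_ge: assumes "finite I" "n \<in> chainset I V" shows "n \<le> zdim I V"
  unfolding zdim_chainset
proof (rule cSup_upper[OF assms(2)])
  show "bdd_above (chainset I V)" by (rule bdd_aboveI[of _ "card I"]) (rule chainset_le[OF assms(1)])
qed



lemma inQ_line: assumes fI: "finite I" and f: "inQ I k f"
  shows "\<exists>P. \<forall>t. f (\<lambda>i. a i + t * (b i - a i)) = poly P t"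
proof -
  obtain c where c: "\<forall>y. f y = (\<Sum>m\<in>MK I k. c m * mnm I m y)" using f unfolding inQ_def by blast
  define P where "P = (\<Sum>m\<in>MK I k. smult (c m) (\<Prod>i\<in>I. [:a i, b i - a i:] ^ m i))"
  have "f (\<lambda>i. a i + t * (b i - a i)) = poly P t" for t
    unfolding P_def c[rule_format] by (simp add: poly_sum poly_prod mnm_def algebra_simps)
  then show ?thesis by blast
qed

lemma poly_on_line: assumes fI: "finite I" and p: "poly_on I p"
  shows "\<exists>P. \<forall>t. p (\<lambda>i. a i + t * (b i - a i)) = poly P t"
  using poly_on_inQ[OF fI p] inQ_line[OF fI] by blast

lemma affine_irr:
  assumes fI: "finite I" and cl: "zclosed I Z" and ne: "Z \<noteq> {}"
    and aff: "\<And>y z t. y \<in> Z \<Longrightarrow> z \<in> Z \<Longrightarrow> (\<lambda>i. y i + t * (z i - y i)) \<in> Z"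
  shows "zirreducible I Z"
  unfolding zirreducible_def
proof (intro conjI cl ne allI impI)
  fix A B assume A: "zclosed I A" and B: "zclosed I B" and sub: "Z \<subseteq> A \<union> B"
  show "Z \<subseteq> A \<or> Z \<subseteq> B"
  proof (rule ccontr)
    assume "\<not> (Z \<subseteq> A \<or> Z \<subseteq> B)"
    then obtain y z where y: "y \<in> Z" "y \<notin> A" and z: "z \<in> Z" "z \<notin> B" by blast
    obtain PA where PA: "\<forall>p\<in>PA. poly_on I p" "A = {y. (\<forall>i. i \<notin> I \<longrightarrow> y i = 0) \<and> (\<forall>p\<in>PA. p y = 0)}"
      using A unfolding zclosed_def by blast
    obtain PB where PB: "\<forall>p\<in>PB. poly_on I p" "B = {y. (\<forall>i. i \<notin> I \<longrightarrow> y i = 0) \<and> (\<forall>p\<in>PB. p y = 0)}"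
      using B unfolding zclosed_def by blast
    have y0: "\<forall>i. i \<notin> I \<longrightarrow> y i = 0" by (intro allI impI zclosed_sub[OF cl y(1)])
    have z0: "\<forall>i. i \<notin> I \<longrightarrow> z i = 0" by (intro allI impI zclosed_sub[OF cl z(1)])
    have "\<not> ((\<forall>i. i \<notin> I \<longrightarrow> y i = 0) \<and> (\<forall>p\<in>PA. p y = 0))" using y(2) unfolding PA(2) by simp
    then obtain p where p: "p \<in> PA" "p y \<noteq> 0" using y0 by blast
    have "\<not> ((\<forall>i. i \<notin> I \<longrightarrow> z i = 0) \<and> (\<forall>p\<in>PB. p z = 0))" using z(2) unfolding PB(2) by simp
    then obtain q where q: "q \<in> PB" "q z \<noteq> 0" using z0 by blast
    obtain Pp where Pp: "\<forall>t. p (\<lambda>i. y i + t * (z i - y i)) = poly Pp t"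
      using poly_on_line[OF fI, of p y z] PA(1) p(1) by blast
    obtain Pq where Pq: "\<forall>t. q (\<lambda>i. y i + t * (z i - y i)) = poly Pq t"
      using poly_on_line[OF fI, of q y z] PB(1) q(1) by blast
    have "poly (Pp * Pq) t = 0" for t
    proof -
      have w: "(\<lambda>i. y i + t * (z i - y i)) \<in> A \<union> B" using aff[OF y(1) z(1)] sub by blast
      have "p (\<lambda>i. y i + t * (z i - y i)) = 0 \<or> q (\<lambda>i. y i + t * (z i - y i)) = 0"
      proof (cases "(\<lambda>i. y i + t * (z i - y i)) \<in> A")
        case True
        then show ?thesis using p(1) unfolding PA(2) by auto
      next
        case False
        then have "(\<lambda>i. y i + t * (z i - y i)) \<in> B" using w by auto
        then show ?thesis using q(1) unfolding PB(2) by auto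
      qed
      then show ?thesis using Pp Pq by auto
    qed
    then have "Pp * Pq = 0" using poly_all_0_iff_0 by blast
    then have "Pp = 0 \<or> Pq = 0" by simp
    moreover have "poly Pp 0 \<noteq> 0" using Pp[rule_format, of 0] p(2) by simp
    moreover have "(\<lambda>i. y i + 1 * (z i - y i)) = z" by auto
    then have "poly Pq 1 \<noteq> 0" using Pq[rule_format, of 1] q(2) by simp
    ultimately show False by auto
  qed
qed

definition ambient :: "'i set \<Rightarrow> ('i \<Rightarrow> real) set" where
  "ambient I = {y. \<forall>i. i \<notin> I \<longrightarrow> y i = 0}"

lemma poly_on_coord: assumes "i \<in> I" "finite I" shows "poly_on I (\<lambda>y. y i)"
  unfolding poly_on_def
proof (rule exI[of _ "{\<lambda>j. if j = i then 1 else 0}"], rule exI[of _ "\<lambda>_. 1"], intro conjI allI)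
  fix y :: "'a \<Rightarrow> real"
  have "(\<Prod>j\<in>I. y j ^ (if j = i then 1 else 0)) = (\<Prod>j\<in>I. if j = i then y j else 1)"
    by (rule prod.cong) auto
  also have "\<dots> = y i" using assms by (simp add: prod.delta)
  finally show "y i = (\<Sum>m\<in>{\<lambda>j. if j = i then 1 else 0}. 1 * (\<Prod>j\<in>I. y j ^ m j))" by simp
qed (use assms in auto)

lemma distinct_nth_notin_take: "distinct xs \<Longrightarrow> k < length xs \<Longrightarrow> xs ! k \<notin> set (take k xs)"
  by (metis distinct_take take_Suc_conv_app_nth distinct_append list.set_intros(1) disjoint_iff)

lemma Zc_closed: assumes fI: "finite I" and S: "S \<subseteq> I"
  shows "zclosed I {y :: 'a \<Rightarrow> real. \<forall>i. i \<notin> S \<longrightarrow> y i = 0}"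
  unfolding zclosed_def
proof (rule exI[of _ "(\<lambda>i y. y i) ` (I - S)"], intro conjI)
  show "\<forall>p\<in>(\<lambda>i y. y i) ` (I - S). poly_on I p"
    using poly_on_coord[OF _ fI] by auto
  show "{y :: 'a \<Rightarrow> real. \<forall>i. i \<notin> S \<longrightarrow> y i = 0} = {y. (\<forall>i. i \<notin> I \<longrightarrow> y i = 0) \<and> (\<forall>p\<in>(\<lambda>i y. y i) ` (I - S). p y = 0)}"
  proof (intro set_eqI iffI)
    fix y :: "'a \<Rightarrow> real" assume "y \<in> {y. \<forall>i. i \<notin> S \<longrightarrow> y i = 0}"
    then have y: "\<forall>i. i \<notin> S \<longrightarrow> y i = 0" by simp
    have "\<forall>i. i \<notin> I \<longrightarrow> y i = 0" using y S by auto
    moreover have "\<forall>p\<in>(\<lambda>i y. y i) ` (I - S). p y = 0" using y by simp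
    ultimately show "y \<in> {y. (\<forall>i. i \<notin> I \<longrightarrow> y i = 0) \<and> (\<forall>p\<in>(\<lambda>i y. y i) ` (I - S). p y = 0)}"
      by blast
  next
    fix y :: "'a \<Rightarrow> real" assume "y \<in> {y. (\<forall>i. i \<notin> I \<longrightarrow> y i = 0) \<and> (\<forall>p\<in>(\<lambda>i y. y i) ` (I - S). p y = 0)}"
    then have a: "\<forall>i. i \<notin> I \<longrightarrow> y i = 0" and b: "\<forall>p\<in>(\<lambda>i y. y i) ` (I - S). p y = 0" by auto
    have "y i = 0" if "i \<notin> S" for i
    proof (cases "i \<in> I")
      case True then show ?thesis using b that by simp
    next
      case False then show ?thesis using a by simp
    qed
    then show "y \<in> {y. \<forall>i. i \<notin> S \<longrightarrow> y i = 0}" by blast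
  qed
qed

lemma Zc_irr: assumes fI: "finite I" and S: "S \<subseteq> I"
  shows "zirreducible I {y :: 'a \<Rightarrow> real. \<forall>i. i \<notin> S \<longrightarrow> y i = 0}"
  by (rule affine_irr[OF fI Zc_closed[OF fI S]]) auto

lemma coord_chain:
  assumes fI: "finite I" and V: "ambient I \<subseteq> V"
  shows "card I \<in> chainset I V"
proof -
  obtain xs where xs: "set xs = I" "distinct xs" using finite_distinct_list[OF fI] by blast
  have len: "length xs = card I" using distinct_card[OF xs(2)] xs(1) by simp
  define Z where "Z = (\<lambda>k. {y :: 'a \<Rightarrow> real. \<forall>i. i \<notin> set (take k xs) \<longrightarrow> y i = 0})"
  have tI: "set (take k xs) \<subseteq> I" for k using xs(1) set_take_subset[of k xs] by simp
  have irr: "zirreducible I (Z k)" for k unfolding Z_def by (rule Zc_irr[OF fI tI])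
  have sub: "Z k \<subseteq> V" for k
  proof
    fix y assume "y \<in> Z k"
    then have "y \<in> ambient I" using tI[of k] unfolding Z_def ambient_def by auto
    then show "y \<in> V" using V by auto
  qed
  have strict: "Z k \<subset> Z (Suc k)" if "k < card I" for k
  proof
    have "set (take k xs) \<subseteq> set (take (Suc k) xs)" by (rule set_take_subset_set_take) simp
    then show "Z k \<subseteq> Z (Suc k)" unfolding Z_def by auto
    define w where "w = (\<lambda>i. if i = xs ! k then 1 else (0::real))"
    have kl: "k < length xs" using that len by simp
    have "xs ! k \<in> set (take (Suc k) xs)" using kl by (simp add: take_Suc_conv_app_nth)
    then have "w \<in> Z (Suc k)" unfolding Z_def w_def by auto
    moreover have "w \<notin> Z k" unfolding Z_def w_def using distinct_nth_notin_take[OF xs(2) kl] by auto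
    ultimately show "Z k \<noteq> Z (Suc k)" by blast
  qed
  show ?thesis unfolding chainset_def
  proof (rule CollectI, rule exI[of _ Z], intro conjI allI impI)
    fix k assume "k \<le> card I" show "zirreducible I (Z k)" by (rule irr)
  next
    fix k assume "k \<le> card I" show "Z k \<subseteq> V" by (rule sub)
  next
    fix k assume "k < card I" then show "Z k \<subset> Z (Suc k)" by (rule strict)
  qed
qed



lemma digits_bound: "(\<forall>i<n. a i < B) \<Longrightarrow> (\<Sum>i<n. a i * B^i) < (B::nat)^n"
proof (induction n)
  case 0 then show ?case by simp
next
  case (Suc n)
  then have IH: "(\<Sum>i<n. a i * B^i) < B^n" by simp
  have "a n < B" using Suc.prems by simp
  then have an: "a n + 1 \<le> B" by simp
  have "(\<Sum>i<Suc n. a i * B^i) = (\<Sum>i<n. a i * B^i) + a n * B^n" by simp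
  also have "\<dots> < B^n + a n * B^n" using IH by simp
  also have "\<dots> = (a n + 1) * B^n" by simp
  also have "\<dots> \<le> B * B^n" using an by (intro mult_right_mono) auto
  finally show ?case by simp
qed

lemma digits_lt_aux:
  fixes Sa Sb x y C :: nat
  assumes "Sa < C" "x < y"
  shows "Sa + x * C < Sb + y * C"
proof -
  have "Sa + x * C < C + x * C" using assms(1) by simp
  also have "\<dots> = (x + 1) * C" by simp
  also have "\<dots> \<le> y * C" using assms(2) by (intro mult_right_mono) auto
  also have "\<dots> \<le> Sb + y * C" by simp
  finally show ?thesis .
qed

lemma digits_inj: "(\<forall>i<n. a i < B) \<Longrightarrow> (\<forall>i<n. b i < B) \<Longrightarrow>
   (\<Sum>i<n. a i * B^i) = (\<Sum>i<n. b i * (B::nat)^i) \<Longrightarrow> \<forall>i<n. a i = b i"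
proof (induction n)
  case 0 then show ?case by simp
next
  case (Suc n)
  have pa: "\<forall>i<n. a i < B" using Suc.prems(1) by simp
  have pb: "\<forall>i<n. b i < B" using Suc.prems(2) by simp
  have A: "(\<Sum>i<n. a i * B^i) < B^n" using pa by (rule digits_bound)
  have Bb: "(\<Sum>i<n. b i * B^i) < B^n" using pb by (rule digits_bound)
  have eq: "(\<Sum>i<n. a i * B^i) + a n * B^n = (\<Sum>i<n. b i * B^i) + b n * B^n"
    using Suc.prems(3) by simp
  have an: "a n = b n"
  proof (rule linorder_cases[of "a n" "b n"])
    assume "a n < b n"
    from digits_lt_aux[OF A this, of "\<Sum>i<n. b i * B^i"] show ?thesis using eq by simp
  next
    assume "b n < a n"
    from digits_lt_aux[OF Bb this, of "\<Sum>i<n. a i * B^i"] show ?thesis using eq by simp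
  qed
  then have "(\<Sum>i<n. a i * B^i) = (\<Sum>i<n. b i * B^i)" using eq by simp
  then have "\<forall>i<n. a i = b i" by (rule Suc.IH[OF pa pb])
  then show ?case using an less_Suc_eq by auto
qed

lemma finite_monoms: "finite (monoms n k)"
proof -
  have "monoms n k \<subseteq> MK {..<n} k"
  proof
    fix \<alpha> assume a: "\<alpha> \<in> monoms n k"
    have "\<alpha> i \<le> k" if "i < n" for i
    proof -
      have "\<alpha> i \<le> (\<Sum>i<n. \<alpha> i)" using that by (intro member_le_sum) auto
      then show ?thesis using a unfolding monoms_def by simp
    qed
    then show "\<alpha> \<in> MK {..<n} k" using a unfolding monoms_def MK_def by auto
  qed
  then show ?thesis using finite_MK[of "{..<n}" k] finite_subset by blast
qed

lemma monoms_indep: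
  fixes c :: "(nat \<Rightarrow> nat) \<Rightarrow> real"
  assumes z: "\<forall>x :: nat \<Rightarrow> real. (\<Sum>\<alpha>\<in>monoms n k. c \<alpha> * (\<Prod>i<n. x i ^ \<alpha> i)) = 0"
    and a0: "\<alpha>0 \<in> monoms n k"
  shows "c \<alpha>0 = 0"
proof -
  define B where "B = k + 1"
  define \<phi> where "\<phi> = (\<lambda>\<alpha>. \<Sum>i<n. \<alpha> i * B^i)"
  have lt: "\<forall>i<n. \<alpha> i < B" if "\<alpha> \<in> monoms n k" for \<alpha>
  proof (intro allI impI)
    fix i assume "i < n"
    then have "\<alpha> i \<le> (\<Sum>i<n. \<alpha> i)" by (intro member_le_sum) auto
    then show "\<alpha> i < B" using that unfolding monoms_def B_def by simp
  qed
  have inj: "\<alpha> = \<beta>" if "\<alpha> \<in> monoms n k" "\<beta> \<in> monoms n k" "\<phi> \<alpha> = \<phi> \<beta>" for \<alpha> \<beta>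
  proof
    fix i
    show "\<alpha> i = \<beta> i"
    proof (cases "i < n")
      case True then show ?thesis using digits_inj[OF lt[OF that(1)] lt[OF that(2)]] that(3)
        unfolding \<phi>_def by blast
    next
      case False then show ?thesis using that(1,2) unfolding monoms_def by simp
    qed
  qed
  define P where "P = (\<Sum>\<alpha>\<in>monoms n k. monom (c \<alpha>) (\<phi> \<alpha>))"
  have "poly P s = 0" for s
  proof -
    have "poly P s = (\<Sum>\<alpha>\<in>monoms n k. c \<alpha> * (\<Prod>i<n. (s ^ (B^i)) ^ \<alpha> i))"
    proof -
      have "(\<Prod>i<n. (s ^ (B^i)) ^ \<alpha> i) = s ^ \<phi> \<alpha>" for \<alpha>
        unfolding \<phi>_def by (simp add: power_sum power_mult[symmetric] mult.commute)
      then show ?thesis unfolding P_def by (simp add: poly_sum poly_monom)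
    qed
    also have "\<dots> = 0" using z[rule_format, of "\<lambda>i. s ^ (B^i)"] by simp
    finally show ?thesis .
  qed
  then have "P = 0" using poly_all_0_iff_0 by blast
  then have "Polynomial.coeff P (\<phi> \<alpha>0) = 0" by simp
  moreover have "Polynomial.coeff P (\<phi> \<alpha>0) = c \<alpha>0"
  proof -
    have "Polynomial.coeff P (\<phi> \<alpha>0) = (\<Sum>\<alpha>\<in>monoms n k. if \<alpha> = \<alpha>0 then c \<alpha> else 0)"
      unfolding P_def coeff_sum coeff_monom
      by (rule sum.cong) (use inj a0 in auto)
    also have "\<dots> = c \<alpha>0" using a0 finite_monoms by (simp add: sum.delta')
    finally show ?thesis .
  qed
  ultimately show ?thesis by simp
qed

lemma coeff_eval:
  fixes c :: "(nat \<Rightarrow> nat) \<Rightarrow> real"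
  assumes c0: "\<forall>\<alpha>. \<alpha> \<notin> monoms n k \<longrightarrow> c \<alpha> = 0"
  shows "Defs.coeff n k (\<lambda>x. \<Sum>\<alpha>\<in>monoms n k. c \<alpha> * (\<Prod>i<n. x i ^ \<alpha> i)) = c"
  unfolding Defs.coeff_def
proof (rule the_equality)
  show "(\<forall>\<alpha>. \<alpha> \<notin> monoms n k \<longrightarrow> c \<alpha> = 0) \<and>
    (\<forall>x. (\<Sum>\<alpha>\<in>monoms n k. c \<alpha> * (\<Prod>i<n. x i ^ \<alpha> i)) = (\<Sum>\<alpha>\<in>monoms n k. c \<alpha> * (\<Prod>i<n. x i ^ \<alpha> i)))"
    using c0 by simp
next
  fix c' assume c': "(\<forall>\<alpha>. \<alpha> \<notin> monoms n k \<longrightarrow> c' \<alpha> = 0) \<and>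
    (\<forall>x. (\<Sum>\<alpha>\<in>monoms n k. c \<alpha> * (\<Prod>i<n. x i ^ \<alpha> i)) = (\<Sum>\<alpha>\<in>monoms n k. c' \<alpha> * (\<Prod>i<n. x i ^ \<alpha> i)))"
  have "\<forall>x. (\<Sum>\<alpha>\<in>monoms n k. (c' \<alpha> - c \<alpha>) * (\<Prod>i<n. x i ^ \<alpha> i)) = 0"
    using c' by (simp add: left_diff_distrib sum_subtractf)
  then have "c' \<alpha> - c \<alpha> = 0" if "\<alpha> \<in> monoms n k" for \<alpha>
    using monoms_indep[where c="\<lambda>\<alpha>. c' \<alpha> - c \<alpha>"] that by blast
  then show "c' = c" using c' c0 by fastforce
qed

lemma sym_full: "ambient (cindex n k D) \<subseteq> sym_tuples n k D"
proof
  fix y assume "y \<in> ambient (cindex n k D)"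
  then have y0: "\<And>p. p \<notin> cindex n k D \<Longrightarrow> y p = 0" unfolding ambient_def by auto
  define F where "F = (\<lambda>x j. \<Sum>\<alpha>\<in>monoms n k. y (j, \<alpha>) * (\<Prod>i<n. x i ^ \<alpha> i))"
  have hf: "\<forall>j<D. hom_form n k (\<lambda>x. F x j)"
  proof (intro allI impI)
    fix j assume "j < D"
    show "hom_form n k (\<lambda>x. F x j)" unfolding hom_form_def F_def
      by (rule exI[of _ "\<lambda>\<alpha>. y (j, \<alpha>)"]) simp
  qed
  have "coords n k D F = y"
  proof
    fix p show "coords n k D F p = y p"
    proof (cases p)
      case (Pair j \<alpha>)
      show ?thesis
      proof (cases "j < D")
        case True
        define c where "c = (\<lambda>\<beta>. if \<beta> \<in> monoms n k then y (j, \<beta>) else 0)"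
        have sx: "F x j = (\<Sum>\<beta>\<in>monoms n k. c \<beta> * (\<Prod>i<n. x i ^ \<beta> i))" for x
          unfolding F_def by (rule sum.cong) (auto simp: c_def)
        have c0: "\<forall>\<beta>. \<beta> \<notin> monoms n k \<longrightarrow> c \<beta> = 0" by (simp add: c_def)
        have "(\<lambda>x. F x j) = (\<lambda>x. \<Sum>\<beta>\<in>monoms n k. c \<beta> * (\<Prod>i<n. x i ^ \<beta> i))"
          using sx by (rule ext)
        then have co: "Defs.coeff n k (\<lambda>x. F x j) = c" using coeff_eval[where c=c, OF c0] by simp
        have "coords n k D F p = c \<alpha>" unfolding Pair coords_def using True co by simp
        also have "\<dots> = y p" using y0[of "(j, \<alpha>)"] Pair unfolding c_def cindex_def by auto
        finally show ?thesis .
      next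
        case False
        have "coords n k D F p = 0" unfolding Pair coords_def using False by simp
        also have "\<dots> = y p" using y0[of "(j, \<alpha>)"] Pair False unfolding cindex_def by auto
        finally show ?thesis .
      qed
    qed
  qed
  then show "y \<in> sym_tuples n k D" unfolding sym_tuples_def
    by (intro image_eqI[of _ _ F]) (use hf in auto)
qed

lemma monoms_card_strict:
  assumes n2: "2 \<le> n" and kk: "k' < k"
  shows "card (monoms n k') < card (monoms n k)"
proof -
  define g where "g = (\<lambda>\<alpha> :: nat \<Rightarrow> nat. \<lambda>i. \<alpha> i + (if i = 0 then k - k' else 0))"
  have inj: "inj_on g (monoms n k')"
  proof (rule inj_onI)
    fix a b assume h: "g a = g b"
    show "a = b"
    proof
      fix i have "g a i = g b i" using h by simp
      then show "a i = b i" unfolding g_def by simp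
    qed
  qed
  have img: "g ` monoms n k' \<subseteq> monoms n k"
  proof
    fix x assume "x \<in> g ` monoms n k'"
    then obtain a where a: "a \<in> monoms n k'" "x = g a" by blast
    have "(\<Sum>i<n. g a i) = (\<Sum>i<n. a i) + (\<Sum>i<n. (if i = 0 then k - k' else 0))"
      unfolding g_def by (simp add: sum.distrib)
    also have "\<dots> = k' + (k - k')" using a(1) n2 unfolding monoms_def by (simp add: sum.delta)
    also have "\<dots> = k" using kk by simp
    finally have sk: "(\<Sum>i<n. g a i) = k" .
    have x0: "\<forall>i\<ge>n. g a i = 0" using a(1) n2 unfolding monoms_def g_def by auto
    show "x \<in> monoms n k" using sk x0 a(2) unfolding monoms_def by simp
  qed
  define \<beta> where "\<beta> = (\<lambda>i::nat. if i = 1 then k else 0)"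
  have "\<beta> \<in> monoms n k" using n2 unfolding monoms_def \<beta>_def by (simp add: sum.delta)
  moreover have "\<beta> \<notin> g ` monoms n k'"
  proof
    assume "\<beta> \<in> g ` monoms n k'"
    then obtain a where "\<beta> = g a" by blast
    then have "\<beta> 0 = g a 0" by simp
    then show False using kk unfolding \<beta>_def g_def by simp
  qed
  ultimately have "g ` monoms n k' \<subset> monoms n k" using img by blast
  then have "card (g ` monoms n k') < card (monoms n k)" using finite_monoms psubset_card_mono by blast
  then show ?thesis using card_image[OF inj] by simp
qed

lemma finite_cindex: "finite (cindex n k D)"
  unfolding cindex_def using finite_monoms by simp

lemma card_cindex: "card (cindex n k D) = D * card (monoms n k)"
  unfolding cindex_def by (simp add: card_cartesian_product)



theorem theorem1:
  fixes r :: nat and dq dn :: "nat list"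
  assumes "r \<ge> 2"
    and "arch dq" and "arch dn"
    and "depth dq > 1" and "depth dn > 1"
    and "dq ! 0 = dn ! 0" and "last dq = last dn"
    and "dq ! 0 \<ge> 2"
    and "qres_filling dq r"
    and "zdim (plain_index dn r) (plain_variety dn r) \<ge> zdim (qres_index dq r) (qres_variety dq r)"
  shows "real (depth dn) \<ge> 1 + (1 + ln 2 / ln (real r)) * (real (depth dq) - 1)"
proof -
  define n0 where "n0 = dq ! 0"
  define D where "D = last dq"
  define kq where "kq = (2 * r) ^ (depth dq - 1)"
  define kn where "kn = r ^ (depth dn - 1)"
  have dqne: "dq \<noteq> []" using assms(2) unfolding arch_def by auto
  have D1: "D \<ge> 1" using assms(2) dqne unfolding arch_def D_def by auto
  have Iq: "qres_index dq r = cindex n0 kq D" unfolding qres_index_def n0_def kq_def D_def by simp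
  have In: "plain_index dn r = cindex n0 kn D"
    unfolding plain_index_def n0_def kn_def D_def using assms(6,7) by simp
  have "card (cindex n0 kq D) \<in> chainset (cindex n0 kq D) (qres_variety dq r)"
  proof (rule coord_chain[OF finite_cindex])
    have "qres_variety dq r = sym_tuples n0 kq D"
      using assms(9) unfolding qres_filling_def n0_def kq_def D_def by simp
    then show "ambient (cindex n0 kq D) \<subseteq> qres_variety dq r" using sym_full by simp
  qed
  then have "card (cindex n0 kq D) \<le> zdim (qres_index dq r) (qres_variety dq r)"
    unfolding Iq by (rule zdim_ge[OF finite_cindex])
  also have "\<dots> \<le> zdim (plain_index dn r) (plain_variety dn r)" by (rule assms(10))
  also have "\<dots> \<le> card (cindex n0 kn D)" unfolding In by (rule zdim_le[OF finite_cindex])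
  finally have "D * card (monoms n0 kq) \<le> D * card (monoms n0 kn)" by (simp add: card_cindex)
  then have "card (monoms n0 kq) \<le> card (monoms n0 kn)" using D1 by simp
  then have kk: "kq \<le> kn" using monoms_card_strict[of n0 kn kq] assms(8) unfolding n0_def by linarith
  define a where "a = depth dq - 1"
  define b where "b = depth dn - 1"
  have ra: "real (depth dq) - 1 = real a" using assms(4) unfolding a_def by simp
  have rb: "real (depth dn) = 1 + real b" using assms(5) unfolding b_def by simp
  have r0: "real r \<ge> 2" using assms(1) by simp
  have lr: "ln (real r) > 0" using r0 by simp
  have "(2 * r) ^ a \<le> r ^ b" using kk unfolding kq_def kn_def a_def b_def .
  then have "real ((2 * r) ^ a) \<le> real (r ^ b)" by (simp only: of_nat_le_iff)
  then have "(2 * real r) ^ a \<le> real r ^ b" by (simp only: of_nat_power of_nat_mult of_nat_numeral)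
  then have "ln ((2 * real r) ^ a) \<le> ln (real r ^ b)" using r0 by (subst ln_le_cancel_iff) auto
  moreover have "ln ((2 * real r) ^ a) = real a * ln (2 * real r)" by (rule ln_realpow)
  moreover have "ln (real r ^ b) = real b * ln (real r)" by (rule ln_realpow)
  ultimately have "real a * ln (2 * real r) \<le> real b * ln (real r)" by simp
  then have key: "real a * (ln 2 + ln (real r)) \<le> real b * ln (real r)" using r0 by (simp add: ln_mult)
  have "(1 + ln 2 / ln (real r)) * real a = real a * (ln 2 + ln (real r)) / ln (real r)"
    using lr by (simp add: field_simps)
  also have "\<dots> \<le> real b" using key lr by (simp add: divide_le_eq)
  finally show ?thesis unfolding ra rb by simp
qed

end
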